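(* Let $(A,* )$ be an involutive associative algebra, $(M,* )$ an involutive $A$-bimodule, and $T:M\to A$ a relative Rota-Baxter operator on $A$ with respect to $M$. If $iH^2_T(M,A)=0$, then every finite order deformation of $T$ extends to a deformation of next order.
   Context: An involutive associative algebra is an associative algebra $A$ with a linear map $*:A\to A$ satisfying $a^{**}=a$ and $(ab)^*=b^*a^*$; an involutive $A$-bimodule is an $A$-bimodule $M$ with $*:M\to M$, $u^{**}=u$, $(au)^*=u^*a^*$, $(ua)^*=a^*u^*$. A relative Rota-Baxter operator is a linear $T:M\to A$ with $T(u^* )=T(u)^*$ and $T(u)T(v)=T(uT(v)+T(u)v)$. Notation: $u\circledast v=uT(v)+T(u)v$, $l_T(u,a)=T(u)a-T(ua)$, $r_T(a,u)=aT(u)-T(au)$. Let $i\mathrm{Hom}(M^{\otimes0},A)=\{a\in A\mid a^*=-a\}$ and for $n\ge1$ $i\mathrm{Hom}(M^{\otimes n},A)=\{f\mid f(u_1,\ldots,u_n)^*=(-1)^{\frac{(n-1)(n-2)}{2}}f(u_n^*,\ldots,u_1^* )\}$. Differential: $d_T(a)(u)=l_T(u,a)-r_T(a,u)$, and for $n\ge1$, $(d_Tf)(u_1,\ldots,u_{n+1})=(-1)^n\big[l_T(u_1,f(u_2,\ldots,u_{n+1}))+\sum_{i=1}^n(-1)^if(u_1,\ldots,u_i\circledast u_{i+1},\ldots,u_{n+1})+(-1)^{n+1}r_T(f(u_1,\ldots,u_n),u_{n+1})\big]$; $iH^\bullet_T(M,A)$ is the cohomology of $(i\mathrm{Hom}(M^{\otimes\bullet},A),d_T)$.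 An order $N$ deformation of $T$ is $T_t=\sum_{i=0}^Nt^iT_i$ with $T_0=T$ such that $T_k(u^* )=T_k(u)^*$ and $\sum_{i+j=k}T_i(u)T_j(v)=\sum_{i+j=k}T_i(uT_j(v)+T_j(u)v)$ for $k=0,\ldots,N$. It extends to next order if there is $T_{N+1}\in i\mathrm{Hom}(M,A)$ making $T_t+t^{N+1}T_{N+1}$ an order $N+1$ deformation. *)

theory Defs
  imports Main "HOL.Vector_Spaces"
begin

text \<open>The algebra A is a type 'a of class ring (associative, not
necessarily unital) with a k-vector space structure scaleA; the bimodule M is a
type 'm with k-vector space structure scaleM, left action lact and right action ract.\<close>

definition sgnp :: "int \<Rightarrow> 'a::ab_group_add \<Rightarrow> 'a" where
  "sgnp e x = (if even e then x else - x)"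

definition involutive_algebra ::
  "('k::field \<Rightarrow> 'a::ring \<Rightarrow> 'a) \<Rightarrow> ('a \<Rightarrow> 'a) \<Rightarrow> bool" where
  "involutive_algebra scaleA starA \<longleftrightarrow>
     vector_space scaleA \<and>
     (\<forall>c a b. scaleA c (a * b) = scaleA c a * b \<and> scaleA c (a * b) = a * scaleA c b) \<and>
     Vector_Spaces.linear scaleA scaleA starA \<and>
     (\<forall>a. starA (starA a) = a) \<and>
     (\<forall>a b. starA (a * b) = starA b * starA a)"

definition involutive_bimodule ::
  "('k::field \<Rightarrow> 'a::ring \<Rightarrow> 'a) \<Rightarrow> ('a \<Rightarrow> 'a) \<Rightarrow>
   ('k \<Rightarrow> 'm::ab_group_add \<Rightarrow> 'm) \<Rightarrow> ('a \<Rightarrow> 'm \<Rightarrow> 'm) \<Rightarrow> ('m \<Rightarrow> 'a \<Rightarrow> 'm) \<Rightarrow> ('m \<Rightarrow> 'm) \<Rightarrow> bool" where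
  "involutive_bimodule scaleA starA scaleM lact ract starM \<longleftrightarrow>
     vector_space scaleM \<and>
     \<comment> \<open>bilinearity of the actions\<close>
     (\<forall>c a b u. lact (scaleA c a + b) u = scaleM c (lact a u) + lact b u) \<and>
     (\<forall>c a u v. lact a (scaleM c u + v) = scaleM c (lact a u) + lact a v) \<and>
     (\<forall>c a b u. ract u (scaleA c a + b) = scaleM c (ract u a) + ract u b) \<and>
     (\<forall>c a u v. ract (scaleM c u + v) a = scaleM c (ract u a) + ract v a) \<and>
     \<comment> \<open>bimodule axioms\<close>
     (\<forall>a b u. lact (a * b) u = lact a (lact b u)) \<and>
     (\<forall>a b u. ract u (a * b) = ract (ract u a) b) \<and>
     (\<forall>a b u. ract (lact a u) b = lact a (ract u b)) \<and>
     \<comment> \<open>involution\<close>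
     Vector_Spaces.linear scaleM scaleM starM \<and>
     (\<forall>u. starM (starM u) = u) \<and>
     (\<forall>a u. starM (lact a u) = ract (starM u) (starA a)) \<and>
     (\<forall>a u. starM (ract u a) = lact (starA a) (starM u))"

definition rel_RB ::
  "('k::field \<Rightarrow> 'a::ring \<Rightarrow> 'a) \<Rightarrow> ('a \<Rightarrow> 'a) \<Rightarrow>
   ('k \<Rightarrow> 'm::ab_group_add \<Rightarrow> 'm) \<Rightarrow> ('a \<Rightarrow> 'm \<Rightarrow> 'm) \<Rightarrow> ('m \<Rightarrow> 'a \<Rightarrow> 'm) \<Rightarrow> ('m \<Rightarrow> 'm) \<Rightarrow>
   ('m \<Rightarrow> 'a) \<Rightarrow> bool" where
  "rel_RB scaleA starA scaleM lact ract starM T \<longleftrightarrow>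
     Vector_Spaces.linear scaleM scaleA T \<and>
     (\<forall>u. T (starM u) = starA (T u)) \<and>
     (\<forall>u v. T u * T v = T (ract u (T v) + lact (T u) v))"

definition circT :: "('a \<Rightarrow> 'm \<Rightarrow> 'm::ab_group_add) \<Rightarrow> ('m \<Rightarrow> 'a \<Rightarrow> 'm) \<Rightarrow> ('m \<Rightarrow> 'a) \<Rightarrow> 'm \<Rightarrow> 'm \<Rightarrow> 'm" where
  "circT lact ract T u v = ract u (T v) + lact (T u) v"

definition lT :: "('a \<Rightarrow> 'm \<Rightarrow> 'm) \<Rightarrow> ('m \<Rightarrow> 'a \<Rightarrow> 'm) \<Rightarrow> ('m \<Rightarrow> 'a::ring) \<Rightarrow> 'm \<Rightarrow> 'a \<Rightarrow> 'a" where
  "lT lact ract T u a = T u * a - T (ract u a)"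

definition rT :: "('a \<Rightarrow> 'm \<Rightarrow> 'm) \<Rightarrow> ('m \<Rightarrow> 'a \<Rightarrow> 'm) \<Rightarrow> ('m \<Rightarrow> 'a::ring) \<Rightarrow> 'a \<Rightarrow> 'm \<Rightarrow> 'a" where
  "rT lact ract T a u = a * T u - T (lact a u)"

text \<open>n-cochains: maps on lists of length n (value 0 on lists of other lengths),
k-linear in each argument (i.e. linear maps on M^{\<otimes>n}), with the involution
condition. For n = 0 this is the set of a = f [] with a* = -a (sign exponent 1).\<close>
definition iHom ::
  "('k::field \<Rightarrow> 'a::ring \<Rightarrow> 'a) \<Rightarrow> ('a \<Rightarrow> 'a) \<Rightarrow> ('k \<Rightarrow> 'm::ab_group_add \<Rightarrow> 'm) \<Rightarrow> ('m \<Rightarrow> 'm) \<Rightarrow>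
   nat \<Rightarrow> ('m list \<Rightarrow> 'a) set" where
  "iHom scaleA starA scaleM starM n =
     {f. (\<forall>xs. length xs \<noteq> n \<longrightarrow> f xs = 0) \<and>
         (\<forall>xs ys c u v. length xs + length ys + 1 = n \<longrightarrow>
             f (xs @ [scaleM c u + v] @ ys) = scaleA c (f (xs @ [u] @ ys)) + f (xs @ [v] @ ys)) \<and>
         (\<forall>xs. length xs = n \<longrightarrow>
             starA (f xs) = sgnp (((int n - 1) * (int n - 2)) div 2) (f (rev (map starM xs))))}"

definition dT ::
  "('a \<Rightarrow> 'm \<Rightarrow> 'm::ab_group_add) \<Rightarrow> ('m \<Rightarrow> 'a \<Rightarrow> 'm) \<Rightarrow> ('m \<Rightarrow> 'a::ring) \<Rightarrow> nat \<Rightarrow>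
   ('m list \<Rightarrow> 'a) \<Rightarrow> ('m list \<Rightarrow> 'a)" where
  "dT lact ract T n f xs =
     (if length xs \<noteq> n + 1 then 0
      else if n = 0 then lT lact ract T (xs ! 0) (f []) - rT lact ract T (f []) (xs ! 0)
      else sgnp (int n)
        (lT lact ract T (hd xs) (f (tl xs))
         + (\<Sum>i = 1..n. sgnp (int i)
              (f (take (i - 1) xs @ [circT lact ract T (xs ! (i - 1)) (xs ! i)] @ drop (i + 1) xs)))
         + sgnp (int n + 1) (rT lact ract T (f (take n xs)) (xs ! n))))"

definition iH_vanishes ::
  "('k::field \<Rightarrow> 'a::ring \<Rightarrow> 'a) \<Rightarrow> ('a \<Rightarrow> 'a) \<Rightarrow> ('k \<Rightarrow> 'm::ab_group_add \<Rightarrow> 'm) \<Rightarrow>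
   ('a \<Rightarrow> 'm \<Rightarrow> 'm) \<Rightarrow> ('m \<Rightarrow> 'a \<Rightarrow> 'm) \<Rightarrow> ('m \<Rightarrow> 'm) \<Rightarrow> ('m \<Rightarrow> 'a) \<Rightarrow> nat \<Rightarrow> bool" where
  "iH_vanishes scaleA starA scaleM lact ract starM T n \<longleftrightarrow>
     (\<forall>f \<in> iHom scaleA starA scaleM starM n. (\<forall>xs. dT lact ract T n f xs = 0) \<longrightarrow>
        (if n = 0 then (\<forall>xs. f xs = 0)
         else (\<exists>g \<in> iHom scaleA starA scaleM starM (n - 1). dT lact ract T (n - 1) g = f)))"

text \<open>Order N deformation T_t = \<Sum>_{i\<le>N} t^i T_i, given by its coefficients Ts i (i \<le> N).\<close>
definition is_deformation ::
  "('k::field \<Rightarrow> 'a::ring \<Rightarrow> 'a) \<Rightarrow> ('a \<Rightarrow> 'a) \<Rightarrow> ('k \<Rightarrow> 'm::ab_group_add \<Rightarrow> 'm) \<Rightarrow>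
   ('a \<Rightarrow> 'm \<Rightarrow> 'm) \<Rightarrow> ('m \<Rightarrow> 'a \<Rightarrow> 'm) \<Rightarrow> ('m \<Rightarrow> 'm) \<Rightarrow> ('m \<Rightarrow> 'a) \<Rightarrow>
   nat \<Rightarrow> (nat \<Rightarrow> 'm \<Rightarrow> 'a) \<Rightarrow> bool" where
  "is_deformation scaleA starA scaleM lact ract starM T N Ts \<longleftrightarrow>
     Ts 0 = T \<and>
     (\<forall>k \<le> N. Vector_Spaces.linear scaleM scaleA (Ts k) \<and> (\<forall>u. Ts k (starM u) = starA (Ts k u))) \<and>
     (\<forall>k \<le> N. \<forall>u v.
        (\<Sum>i \<le> k. Ts i u * Ts (k - i) v) =
        (\<Sum>i \<le> k. Ts i (ract u (Ts (k - i) v) + lact (Ts (k - i) u) v)))"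

end

theory Submission
  imports Defs
begin


definition Tri :: "nat \<Rightarrow> (nat \<times> nat \<times> nat) set" where
  "Tri n = {(x,y,z). x + y + z = n}"

lemma L1: "(\<Sum>a\<le>n. \<Sum>p\<le>n-a. F a p (n-a-p)) = (\<Sum>(x,y,z)\<in>Tri n. F x y z)"
proof -
  have "(\<Sum>a\<le>n. \<Sum>p\<le>n-a. F a p (n-a-p)) = (\<Sum>(a,p)\<in>Sigma {..n} (\<lambda>a. {..n-a}). F a p (n-a-p))"
    by (rule sum.Sigma) auto
  moreover have b: "bij_betw (\<lambda>(a, p). (a, p, n - a - p)) (Sigma {..n} (\<lambda>a. {..n - a})) (Tri n)"
      unfolding bij_betw_def inj_on_def Tri_def
      by (auto simp: image_iff intro!: bexI[where x="(_,_)"])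
  have "(\<Sum>(x,y,z)\<in>Tri n. F x y z) = (\<Sum>(a,p)\<in>Sigma {..n} (\<lambda>a. {..n-a}). F a p (n-a-p))"
    using sum.reindex_bij_betw[OF b, of "\<lambda>(x,y,z). F x y z", symmetric]
    by (simp add: split_beta)
  ultimately show ?thesis by simp
qed

lemma L2: "(\<Sum>a\<le>n. \<Sum>p\<le>a. F p (a-p) (n-a)) = (\<Sum>(x,y,z)\<in>Tri n. F x y z)"
proof -
  have "(\<Sum>a\<le>n. \<Sum>p\<le>a. F p (a-p) (n-a)) = (\<Sum>(a,p)\<in>Sigma {..n} (\<lambda>a. {..a}). F p (a-p) (n-a))"
    by (rule sum.Sigma) auto
  moreover have b: "bij_betw (\<lambda>(a, p). (p, a-p, n - a)) (Sigma {..n} (\<lambda>a. {..a})) (Tri n)"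
      unfolding bij_betw_def inj_on_def Tri_def
      by (auto simp: image_iff intro!: bexI[where x="(_,_)"]) (rule_tac x="a+aa" in bexI, auto)
  have "(\<Sum>(x,y,z)\<in>Tri n. F x y z) = (\<Sum>(a,p)\<in>Sigma {..n} (\<lambda>a. {..a}). F p (a-p) (n-a))"
    using sum.reindex_bij_betw[OF b, of "\<lambda>(x,y,z). F x y z", symmetric]
    by (simp add: split_beta)
  ultimately show ?thesis by simp
qed

lemma Lswap: "(\<Sum>(x,y,z)\<in>Tri n. F x y z) = (\<Sum>(x,y,z)\<in>Tri n. F x z y)"
proof -
  have b: "bij_betw (\<lambda>(x,y,z). (x,z,y)) (Tri n) (Tri n)"
    unfolding bij_betw_def inj_on_def Tri_def
    by (auto simp: image_iff)
  show ?thesis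
    using sum.reindex_bij_betw[OF b, of "\<lambda>(x,y,z). F x y z"]
    by (simp add: split_beta)
qed



locale pre =
  fixes lact :: "'a::ring \<Rightarrow> 'm::ab_group_add \<Rightarrow> 'm" and ract :: "'m \<Rightarrow> 'a \<Rightarrow> 'm"
    and TT :: "nat \<Rightarrow> 'm \<Rightarrow> 'a"
  assumes l_add1: "lact (a+b) u = lact a u + lact b u"
  and l_add2: "lact a (u+v) = lact a u + lact a v"
  and r_add1: "ract (u+v) a = ract u a + ract v a"
  and r_add2: "ract u (a+b) = ract u a + ract u b"
  and l_assoc: "lact (a*b) u = lact a (lact b u)"
  and r_assoc: "ract u (a*b) = ract (ract u a) b"
  and lr: "ract (lact a u) b = lact a (ract u b)"
  and T_add: "TT i (u+v) = TT i u + TT i v"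
begin

lemma l1: "lact 0 u = 0" "lact (-a) u = - lact a u" "lact (a - b) u = lact a u - lact b u"
  "lact (sum f A) u = (\<Sum>x\<in>A. lact (f x) u)"
proof -
  interpret additive "\<lambda>a. lact a u" by standard (rule l_add1)
  show "lact 0 u = 0" "lact (-a) u = - lact a u" "lact (a - b) u = lact a u - lact b u"
  "lact (sum f A) u = (\<Sum>x\<in>A. lact (f x) u)" by (simp_all add: zero minus diff sum)
qed
lemma l2: "lact a 0 = 0" "lact a (-u) = - lact a u" "lact a (u - v) = lact a u - lact a v"
  "lact a (sum f A) = (\<Sum>x\<in>A. lact a (f x))"
proof -
  interpret additive "\<lambda>u. lact a u" by standard (rule l_add2)
  show "lact a 0 = 0" "lact a (-u) = - lact a u" "lact a (u - v) = lact a u - lact a v"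
  "lact a (sum f A) = (\<Sum>x\<in>A. lact a (f x))" by (simp_all add: zero minus diff sum)
qed
lemma r1: "ract 0 a = 0" "ract (-u) a = - ract u a" "ract (u - v) a = ract u a - ract v a"
  "ract (sum f A) a = (\<Sum>x\<in>A. ract (f x) a)"
proof -
  interpret additive "\<lambda>u. ract u a" by standard (rule r_add1)
  show "ract 0 a = 0" "ract (-u) a = - ract u a" "ract (u - v) a = ract u a - ract v a"
  "ract (sum f A) a = (\<Sum>x\<in>A. ract (f x) a)" by (simp_all add: zero minus diff sum)
qed
lemma r2: "ract u 0 = 0" "ract u (-a) = - ract u a" "ract u (a - b) = ract u a - ract u b"
  "ract u (sum f A) = (\<Sum>x\<in>A. ract u (f x))"
proof -
  interpret additive "\<lambda>a. ract u a" by standard (rule r_add2)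
  show "ract u 0 = 0" "ract u (-a) = - ract u a" "ract u (a - b) = ract u a - ract u b"
  "ract u (sum f A) = (\<Sum>x\<in>A. ract u (f x))" by (simp_all add: zero minus diff sum)
qed
lemma t1: "TT i 0 = 0" "TT i (-u) = - TT i u" "TT i (u - v) = TT i u - TT i v"
  "TT i (sum f A) = (\<Sum>x\<in>A. TT i (f x))"
proof -
  interpret additive "\<lambda>u. TT i u" by standard (rule T_add)
  show "TT i 0 = 0" "TT i (-u) = - TT i u" "TT i (u - v) = TT i u - TT i v"
  "TT i (sum f A) = (\<Sum>x\<in>A. TT i (f x))" by (simp_all add: zero minus diff sum)
qed

lemmas lin = l_add1 l_add2 r_add1 r_add2 T_add l1 l2 r1 r2 t1

definition circ :: "nat \<Rightarrow> 'm \<Rightarrow> 'm \<Rightarrow> 'm" where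
  "circ k u v = ract u (TT k v) + lact (TT k u) v"

definition Phi :: "nat \<Rightarrow> 'm \<Rightarrow> 'm \<Rightarrow> 'a" where
  "Phi k u v = (\<Sum>p\<le>k. TT p u * TT (k-p) v - TT p (circ (k-p) u v))"

definition E :: "nat \<Rightarrow> 'm \<Rightarrow> 'm \<Rightarrow> 'm \<Rightarrow> 'a" where
  "E n u v w = (\<Sum>a\<le>n. TT a u * Phi (n-a) v w - Phi a (circ (n-a) u v) w + Phi a u (circ (n-a) v w)
      - Phi a u v * TT (n-a) w - TT a (ract u (Phi (n-a) v w)) + TT a (lact (Phi (n-a) u v) w))"

lemma E_zero: "E n u v w = 0"
proof -
  define F1 where "F1 x y z = TT x u * (TT y v * TT z w - TT y (circ z v w))" for x y z
  define F2a where "F2a x y z = TT x (circ z u v) * TT y w - TT x (ract (circ z u v) (TT y w))" for x y z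
  define F2b where "F2b x y z = TT x (lact (TT y (circ z u v)) w)" for x y z
  define F3 where "F3 x y z = TT x u * TT y (circ z v w) - TT x (circ y u (circ z v w))" for x y z
  define F4 where "F4 x y z = (TT x u * TT y v - TT x (circ y u v)) * TT z w" for x y z
  define F5 where "F5 x y z = TT x (ract u (TT y v * TT z w - TT y (circ z v w)))" for x y z
  define F6 where "F6 x y z = TT x (lact (TT y u * TT z v - TT y (circ z u v)) w)" for x y z
  have s1: "(\<Sum>a\<le>n. TT a u * Phi (n-a) v w) = (\<Sum>(x,y,z)\<in>Tri n. F1 x y z)"
    unfolding L1[symmetric] by (simp add: Phi_def F1_def sum_distrib_left)
  have s2: "(\<Sum>a\<le>n. Phi a (circ (n-a) u v) w) = (\<Sum>(x,y,z)\<in>Tri n. F2a x y z) - (\<Sum>(x,y,z)\<in>Tri n. F2b x y z)"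
    unfolding L2[symmetric] sum_subtractf[symmetric]
    by (simp add: Phi_def F2a_def F2b_def circ_def lin diff_diff_eq)
  have s3: "(\<Sum>a\<le>n. Phi a u (circ (n-a) v w)) = (\<Sum>(x,y,z)\<in>Tri n. F3 x y z)"
    unfolding L2[symmetric] by (simp add: Phi_def F3_def)
  have s4: "(\<Sum>a\<le>n. Phi a u v * TT (n-a) w) = (\<Sum>(x,y,z)\<in>Tri n. F4 x y z)"
    unfolding L2[symmetric] by (simp add: Phi_def F4_def sum_distrib_right)
  have s5: "(\<Sum>a\<le>n. TT a (ract u (Phi (n-a) v w))) = (\<Sum>(x,y,z)\<in>Tri n. F5 x y z)"
    unfolding L1[symmetric] by (simp add: Phi_def F5_def r2 t1)
  have s6: "(\<Sum>a\<le>n. TT a (lact (Phi (n-a) u v) w)) = (\<Sum>(x,y,z)\<in>Tri n. F6 x y z)"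
    unfolding L1[symmetric] by (simp add: Phi_def F6_def l1 t1)
  have sw: "(\<Sum>(x,y,z)\<in>Tri n. F2a x y z) = (\<Sum>(x,y,z)\<in>Tri n. F2a x z y)"
    by (rule Lswap)
  have "E n u v w = (\<Sum>(x,y,z)\<in>Tri n. F1 x y z) - ((\<Sum>(x,y,z)\<in>Tri n. F2a x z y) - (\<Sum>(x,y,z)\<in>Tri n. F2b x y z))
     + (\<Sum>(x,y,z)\<in>Tri n. F3 x y z) - (\<Sum>(x,y,z)\<in>Tri n. F4 x y z) - (\<Sum>(x,y,z)\<in>Tri n. F5 x y z)
     + (\<Sum>(x,y,z)\<in>Tri n. F6 x y z)"
    unfolding E_def s1[symmetric] s2[symmetric] s3[symmetric] s4[symmetric] s5[symmetric] s6[symmetric] sw[symmetric]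
    by (simp add: sum.distrib sum_subtractf)
  also have "\<dots> = (\<Sum>(x,y,z)\<in>Tri n. F1 x y z - (F2a x z y - F2b x y z) + F3 x y z - F4 x y z - F5 x y z + F6 x y z)"
    by (simp add: sum.distrib sum_subtractf split_beta)
  also have "\<dots> = (\<Sum>(x,y,z)\<in>Tri n. 0)"
    by (rule sum.cong, simp, clarify, simp add: F1_def F2a_def F2b_def F3_def F4_def F5_def F6_def circ_def lin
         r_assoc[symmetric] l_assoc[symmetric] lr algebra_simps)
  finally show ?thesis by simp
qed

end

context pre begin

lemma E_collapse:
  assumes n: "0 < n" and van: "\<forall>k<n. \<forall>x y. Phi k x y = 0"
  shows "E n u v w = TT 0 u * Phi n v w - TT 0 (ract u (Phi n v w)) + TT 0 (lact (Phi n u v) w)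
     - Phi n (circ 0 u v) w + Phi n u (circ 0 v w) - Phi n u v * TT 0 w"
proof -
  define f where "f a = TT a u * Phi (n-a) v w - Phi a (circ (n-a) u v) w + Phi a u (circ (n-a) v w)
      - Phi a u v * TT (n-a) w - TT a (ract u (Phi (n-a) v w)) + TT a (lact (Phi (n-a) u v) w)" for a
  have "E n u v w = sum f {..n}" unfolding E_def f_def by simp
  also have "\<dots> = sum f {0, n}"
  proof (rule sum.mono_neutral_right)
    show "\<forall>i\<in>{..n} - {0, n}. f i = 0"
    proof
      fix i assume "i \<in> {..n} - {0, n}"
      then have "0 < i" "i < n" "n - i < n" by auto
      then show "f i = 0" using van unfolding f_def by (simp add: lin)
    qed
  qed auto
  also have "\<dots> = f 0 + f n" using n by simp
  also have "\<dots> = TT 0 u * Phi n v w - TT 0 (ract u (Phi n v w)) + TT 0 (lact (Phi n u v) w)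
     - Phi n (circ 0 u v) w + Phi n u (circ 0 v w) - Phi n u v * TT 0 w"
    using n van unfolding f_def by (simp add: lin)
  finally show ?thesis .
qed

end


lemma split_sum: "(\<Sum>i\<le>Suc N. f i) = f 0 + f (Suc N) + (\<Sum>i\<in>{1..N}. (f i :: 'b::comm_monoid_add))"
proof -
  have "{..N} = insert 0 {1..N}" by auto
  then show ?thesis by (simp add: sum.atMost_Suc add_ac)
qed

theorem mainTheorem8:
  fixes scaleA :: "'k::field \<Rightarrow> 'a::ring \<Rightarrow> 'a"
    and starA :: "'a \<Rightarrow> 'a"
    and scaleM :: "'k \<Rightarrow> 'm::ab_group_add \<Rightarrow> 'm"
    and lact :: "'a \<Rightarrow> 'm \<Rightarrow> 'm" and ract :: "'m \<Rightarrow> 'a \<Rightarrow> 'm"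
    and starM :: "'m \<Rightarrow> 'm"
    and T :: "'m \<Rightarrow> 'a"
    and N :: nat and Ts :: "nat \<Rightarrow> 'm \<Rightarrow> 'a"
  assumes "involutive_algebra scaleA starA"
    and "involutive_bimodule scaleA starA scaleM lact ract starM"
    and "rel_RB scaleA starA scaleM lact ract starM T"
    and "iH_vanishes scaleA starA scaleM lact ract starM T 2"
    and "is_deformation scaleA starA scaleM lact ract starM T N Ts"
  shows "\<exists>S. Vector_Spaces.linear scaleM scaleA S \<and> (\<forall>u. S (starM u) = starA (S u)) \<and>
             is_deformation scaleA starA scaleM lact ract starM T (N + 1) (Ts(N + 1 := S))"
proof -
  note ia = assms(1)[unfolded involutive_algebra_def]
  note ib = assms(2)[unfolded involutive_bimodule_def]
  note rb = assms(3)[unfolded rel_RB_def]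
  note df = assms(5)[unfolded is_deformation_def]
  have vsA: "vector_space scaleA" using ia by blast
  have vsM: "vector_space scaleM" using ib by blast
  interpret A: vector_space scaleA by (rule vsA)
  interpret M: vector_space scaleM by (rule vsM)
  have mul1: "scaleA c a * b = scaleA c (a * b)" and mul2: "a * scaleA c b = scaleA c (a * b)" for c a b
    using ia by metis+
  have starlin: "Vector_Spaces.linear scaleA scaleA starA" using ia by blast
  have sAadd: "starA (a + b) = starA a + starA b" for a b using starlin by (simp add: linear_iff)
  interpret SA: additive starA by standard (rule sAadd)
  have sAmul: "starA (a * b) = starA b * starA a" for a b using ia by blast
  have lb1: "lact (scaleA c a + b) u = scaleM c (lact a u) + lact b u" for c a b u using ib[THEN conjunct2, THEN conjunct1, rule_format] .
  have lb2: "lact a (scaleM c u + v) = scaleM c (lact a u) + lact a v" for c a u v using ib[THEN conjunct2, THEN conjunct2, THEN conjunct1, rule_format] .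
  have rb1: "ract u (scaleA c a + b) = scaleM c (ract u a) + ract u b" for c a b u using ib[THEN conjunct2, THEN conjunct2, THEN conjunct2, THEN conjunct1, rule_format] .
  have rb2: "ract (scaleM c u + v) a = scaleM c (ract u a) + ract v a" for c a u v using ib[THEN conjunct2, THEN conjunct2, THEN conjunct2, THEN conjunct2, THEN conjunct1, rule_format] .
  have las: "lact (a * b) u = lact a (lact b u)" for a b u using ib[THEN conjunct2, THEN conjunct2, THEN conjunct2, THEN conjunct2, THEN conjunct2, THEN conjunct1, rule_format] .
  have ras: "ract u (a * b) = ract (ract u a) b" for a b u using ib[THEN conjunct2, THEN conjunct2, THEN conjunct2, THEN conjunct2, THEN conjunct2, THEN conjunct2, THEN conjunct1, rule_format] .
  have lras: "ract (lact a u) b = lact a (ract u b)" for a b u using ib[THEN conjunct2, THEN conjunct2, THEN conjunct2, THEN conjunct2, THEN conjunct2, THEN conjunct2, THEN conjunct2, THEN conjunct1, rule_format] .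
  have sMl: "starM (lact a u) = ract (starM u) (starA a)" for a u using ib[THEN conjunct2, THEN conjunct2, THEN conjunct2, THEN conjunct2, THEN conjunct2, THEN conjunct2, THEN conjunct2, THEN conjunct2, THEN conjunct2, THEN conjunct2, THEN conjunct1, rule_format] .
  have sMr: "starM (ract u a) = lact (starA a) (starM u)" for a u using ib[THEN conjunct2, THEN conjunct2, THEN conjunct2, THEN conjunct2, THEN conjunct2, THEN conjunct2, THEN conjunct2, THEN conjunct2, THEN conjunct2, THEN conjunct2, THEN conjunct2, rule_format] .
  have sMadd: "starM (u + v) = starM u + starM v" for u v using ib by (simp add: linear_iff)
  have Ts0: "Ts 0 = T" using df by blast
  have Tslin: "k \<le> N \<Longrightarrow> Vector_Spaces.linear scaleM scaleA (Ts k)" for k using df by blast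
  have Tsstar: "k \<le> N \<Longrightarrow> Ts k (starM u) = starA (Ts k u)" for k u using df by blast
  have Tseq: "k \<le> N \<Longrightarrow> (\<Sum>i \<le> k. Ts i u * Ts (k - i) v) =
        (\<Sum>i \<le> k. Ts i (ract u (Ts (k - i) v) + lact (Ts (k - i) u) v))" for k u v using df by blast
  have Tsadd: "k \<le> N \<Longrightarrow> Ts k (x + y) = Ts k x + Ts k y" for k x y using Tslin[of k] by (simp add: linear_iff)
  define T' where "T' i = (if i \<le> N then Ts i else (\<lambda>_. 0))" for i
  have T'add: "T' i (u + v) = T' i u + T' i v" for i u v
    using Tslin[of i] by (simp add: T'_def linear_iff)
  have T'sc: "T' i (scaleM c u) = scaleA c (T' i u)" for i c u
    using Tslin[of i] by (simp add: T'_def linear_iff)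
  have T'star: "T' i (starM u) = starA (T' i u)" for i u
    using Tsstar[of i] by (simp add: T'_def SA.zero)
  have T'0: "T' 0 = T" by (simp add: T'_def Ts0)
  have l_add1: "lact (a+b) u = lact a u + lact b u" for a b u using lb1[of 1 a b u] by simp
  have l_add2: "lact a (u+v) = lact a u + lact a v" for a u v using lb2[of a 1 u v] by simp
  have r_add1: "ract (u+v) a = ract u a + ract v a" for a u v using rb2[of 1 u v a] by simp
  have r_add2: "ract u (a+b) = ract u a + ract u b" for a b u using rb1[of u 1 a b] by simp
  interpret P: pre lact ract T'
    by unfold_locales (simp_all add: l_add1 l_add2 r_add1 r_add2 las ras lras T'add)
  have lsc1: "lact (scaleA c a) u = scaleM c (lact a u)" for c a u using lb1[of c a 0 u] by (simp add: P.lin)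
  have lsc2: "lact a (scaleM c u) = scaleM c (lact a u)" for c a u using lb2[of a c u 0] by (simp add: P.lin)
  have rsc1: "ract (scaleM c u) a = scaleM c (ract u a)" for c a u using rb2[of c u 0 a] by (simp add: P.lin)
  have rsc2: "ract u (scaleA c a) = scaleM c (ract u a)" for c a u using rb1[of u c a 0] by (simp add: P.lin)
  have van: "\<forall>k<Suc N. \<forall>x y. P.Phi k x y = 0"
  proof (intro allI impI)
    fix k x y assume k: "k < Suc N"
    have "P.Phi k x y = (\<Sum>i\<le>k. Ts i x * Ts (k - i) y - Ts i (ract x (Ts (k - i) y) + lact (Ts (k - i) x) y))"
      unfolding P.Phi_def P.circ_def using k by (intro sum.cong) (auto simp: T'_def)
    also have "\<dots> = 0" using Tseq[of k x y] k by (simp add: sum_subtractf)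
    finally show "P.Phi k x y = 0" .
  qed
  have Phi_l: "P.Phi k (scaleM c x + y) z = scaleA c (P.Phi k x z) + P.Phi k y z" for k c x y z
    unfolding P.Phi_def A.scale_sum_right sum.distrib[symmetric]
    by (rule sum.cong[OF refl]) (simp add: P.circ_def T'add T'sc P.lin lsc1 lsc2 rsc1 rsc2 M.scale_right_distrib
         A.scale_right_distrib A.scale_right_diff_distrib mul1 mul2 algebra_simps)
  have Phi_r: "P.Phi k z (scaleM c x + y) = scaleA c (P.Phi k z x) + P.Phi k z y" for k c x y z
    unfolding P.Phi_def A.scale_sum_right sum.distrib[symmetric]
    by (rule sum.cong[OF refl]) (simp add: P.circ_def T'add T'sc P.lin lsc1 lsc2 rsc1 rsc2 M.scale_right_distrib
         A.scale_right_distrib A.scale_right_diff_distrib mul1 mul2 algebra_simps)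
  have Phi_star: "starA (P.Phi k x y) = P.Phi k (starM y) (starM x)" for k x y
  proof -
    have "starA (P.Phi k x y) = (\<Sum>p\<le>k. T' (k-p) (starM y) * T' p (starM x)) - (\<Sum>p\<le>k. T' p (P.circ (k-p) (starM y) (starM x)))"
      unfolding P.Phi_def SA.sum sum_subtractf[symmetric]
      by (rule sum.cong[OF refl]) (simp add: SA.diff sAadd SA.minus sAmul P.circ_def T'star[symmetric] T'add sMadd sMl sMr add.commute)
    also have "(\<Sum>p\<le>k. T' (k-p) (starM y) * T' p (starM x)) = (\<Sum>p\<le>k. T' p (starM y) * T' (k-p) (starM x))"
      using sum.atLeastAtMost_rev[of "\<lambda>p. T' p (starM y) * T' (k-p) (starM x)" 0 k]
      by (simp add: atLeast0AtMost)
    finally show ?thesis unfolding P.Phi_def by (simp add: sum_subtractf)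
  qed
  define Ob where "Ob xs = (if length xs = 2 then - P.Phi (Suc N) (xs!0) (xs!1) else 0)" for xs
  have Ob_in: "Ob \<in> iHom scaleA starA scaleM starM 2"
    unfolding iHom_def
  proof (intro CollectI conjI allI impI)
    fix xs :: "'m list" assume "length xs \<noteq> 2" then show "Ob xs = 0" by (simp add: Ob_def)
  next
    fix xs ys :: "'m list" and c u v assume len: "length xs + length ys + 1 = 2"
    then consider "xs = []" "length ys = 1" | "length xs = 1" "ys = []" by (cases xs) auto
    then show "Ob (xs @ [scaleM c u + v] @ ys) = scaleA c (Ob (xs @ [u] @ ys)) + Ob (xs @ [v] @ ys)"
    proof cases
      case 1
      then obtain y where "ys = [y]" by (cases ys) auto
      then show ?thesis using 1 by (simp add: Ob_def Phi_l)
    next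
      case 2
      then obtain x where "xs = [x]" by (cases xs rule: list.exhaust) auto
      then show ?thesis using 2 by (simp add: Ob_def Phi_r)
    qed
  next
    fix xs :: "'m list" assume "length xs = 2"
    then obtain x y where "xs = [x, y]"
      by (cases xs; cases "tl xs") auto
    then show "starA (Ob xs) = sgnp ((int 2 - 1) * (int 2 - 2) div 2) (Ob (rev (map starM xs)))"
      by (simp add: Ob_def sgnp_def SA.minus Phi_star)
  qed
  have Ob_cl: "\<forall>xs. dT lact ract T 2 Ob xs = 0"
  proof
    fix xs :: "'m list"
    show "dT lact ract T 2 Ob xs = 0"
    proof (cases "length xs = 3")
      case False then show ?thesis by (simp add: dT_def)
    next
      case True
      then obtain u v w where xs: "xs = [u, v, w]"
        by (cases xs; cases "tl xs"; cases "tl (tl xs)") auto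
      have hz: "T' 0 u * P.Phi (Suc N) v w - T' 0 (ract u (P.Phi (Suc N) v w)) + T' 0 (lact (P.Phi (Suc N) u v) w)
         - P.Phi (Suc N) (P.circ 0 u v) w + P.Phi (Suc N) u (P.circ 0 v w) - P.Phi (Suc N) u v * T' 0 w = 0"
        using P.E_collapse[of "Suc N" u v w] van P.E_zero by simp
      have s12: "{1..2::nat} = {1, 2}" by auto
      have "dT lact ract T 2 Ob xs = - (T' 0 u * P.Phi (Suc N) v w - T' 0 (ract u (P.Phi (Suc N) v w)) + T' 0 (lact (P.Phi (Suc N) u v) w)
         - P.Phi (Suc N) (P.circ 0 u v) w + P.Phi (Suc N) u (P.circ 0 v w) - P.Phi (Suc N) u v * T' 0 w)"
        unfolding T'0[symmetric] xs dT_def s12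
        by (simp add: sgnp_def Ob_def lT_def rT_def circT_def P.circ_def P.lin algebra_simps)
      then show ?thesis using hz by simp
    qed
  qed
  obtain g where g: "g \<in> iHom scaleA starA scaleM starM 1" and dg: "dT lact ract T 1 g = Ob"
    using assms(4) Ob_in Ob_cl unfolding iH_vanishes_def by fastforce
  have Tadd: "T (x + y) = T x + T y" for x y using rb by (simp add: linear_iff)
  have giH: "\<forall>xs ys c u v. length xs + length ys + 1 = 1 \<longrightarrow>
             g (xs @ [scaleM c u + v] @ ys) = scaleA c (g (xs @ [u] @ ys)) + g (xs @ [v] @ ys)"
    using g by (simp add: iHom_def)
  have g_add: "g [scaleM c u + v] = scaleA c (g [u]) + g [v]" for c u v
    using giH[rule_format, of "[]" "[]" c u v] by simp
  have g_star: "starA (g [u]) = g [starM u]" for u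
    using g by (simp add: iHom_def sgnp_def)
  have g0: "g [0] = 0" using g_add[of 1 0 0] by simp
  define S where "S u = - g [u]" for u
  have Slin: "Vector_Spaces.linear scaleM scaleA S"
    unfolding linear_iff
  proof (intro conjI allI)
    show "S (x + y) = S x + S y" for x y using g_add[of 1 x y] by (simp add: S_def)
    show "S (scaleM c x) = scaleA c (S x)" for c x using g_add[of c x 0] g0 by (simp add: S_def)
  qed (auto simp: vsA vsM)
  have Sstar: "S (starM u) = starA (S u)" for u by (simp add: S_def SA.minus g_star)
  have key: "T u * S v - T (ract u (S v)) - S (ract u (T v) + lact (T u) v) + S u * T v - T (lact (S u) v)
      = - P.Phi (Suc N) u v" for u v
  proof -
    have s11: "{1..1::nat} = {1}" by auto
    have "dT lact ract T 1 g [u, v] = Ob [u, v]" using dg by simp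
    then show ?thesis
      unfolding dT_def s11
      by (simp add: sgnp_def Ob_def lT_def rT_def circT_def S_def P.lin algebra_simps Tadd
          additive.minus[OF additive.intro, OF Tadd])
  qed
  show ?thesis
  proof (intro exI[of _ S] conjI allI Slin Sstar)
    show "is_deformation scaleA starA scaleM lact ract starM T (N + 1) (Ts(N + 1 := S))"
      unfolding is_deformation_def
    proof (intro conjI allI impI)
      show "(Ts(N + 1 := S)) 0 = T" by (simp add: Ts0)
    next
      fix k assume "k \<le> N + 1"
      then show "Vector_Spaces.linear scaleM scaleA ((Ts(N + 1 := S)) k)"
        using Slin Tslin by (cases "k = N + 1"; simp)
    next
      fix k u assume "k \<le> N + 1"
      then show "(Ts(N + 1 := S)) k (starM u) = starA ((Ts(N + 1 := S)) k u)"
        using Sstar Tsstar by (cases "k = N + 1"; simp)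
    next
      fix k u v assume k: "k \<le> N + 1"
      let ?Tn = "Ts(N + 1 := S)"
      show "(\<Sum>i\<le>k. ?Tn i u * ?Tn (k - i) v) = (\<Sum>i\<le>k. ?Tn i (ract u (?Tn (k - i) v) + lact (?Tn (k - i) u) v))"
      proof (cases "k \<le> N")
        case True
        have "(\<Sum>i\<le>k. ?Tn i u * ?Tn (k - i) v) = (\<Sum>i\<le>k. Ts i u * Ts (k - i) v)"
          using True by (intro sum.cong) auto
        also have "\<dots> = (\<Sum>i\<le>k. Ts i (ract u (Ts (k - i) v) + lact (Ts (k - i) u) v))"
          using Tseq[OF True] .
        also have "\<dots> = (\<Sum>i\<le>k. ?Tn i (ract u (?Tn (k - i) v) + lact (?Tn (k - i) u) v))"
          using True by (intro sum.cong) auto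
        finally show ?thesis .
      next
        case False
        then have kN: "k = Suc N" using k by simp
        define midL where "midL = (\<Sum>i\<in>{1..N}. Ts i u * Ts (Suc N - i) v)"
        define midR where "midR = (\<Sum>i\<in>{1..N}. Ts i (ract u (Ts (Suc N - i) v) + lact (Ts (Suc N - i) u) v))"
        have hL: "(\<Sum>i\<le>k. ?Tn i u * ?Tn (k - i) v) = T u * S v + S u * T v + midL"
          unfolding kN split_sum midL_def by (simp add: Ts0, intro sum.cong) auto
        have hR: "(\<Sum>i\<le>k. ?Tn i (ract u (?Tn (k - i) v) + lact (?Tn (k - i) u) v))
           = T (ract u (S v) + lact (S u) v) + S (ract u (T v) + lact (T u) v) + midR"
          unfolding kN split_sum midR_def by (simp add: Ts0, intro sum.cong) auto
        have hP: "P.Phi (Suc N) u v = midL - midR"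
          unfolding P.Phi_def split_sum midL_def midR_def sum_subtractf[symmetric]
        proof -
          have TS: "T' (Suc N) = (\<lambda>_. 0)" by (simp add: T'_def)
          show "T' 0 u * T' (Suc N - 0) v - T' 0 (P.circ (Suc N - 0) u v) +
             (T' (Suc N) u * T' (Suc N - Suc N) v - T' (Suc N) (P.circ (Suc N - Suc N) u v)) +
             (\<Sum>p = 1..N. T' p u * T' (Suc N - p) v - T' p (P.circ (Suc N - p) u v)) =
             (\<Sum>x = 1..N. Ts x u * Ts (Suc N - x) v - Ts x (ract u (Ts (Suc N - x) v) + lact (Ts (Suc N - x) u) v))"
            by (simp add: TS P.circ_def P.lin, intro sum.cong) (auto simp: T'_def Tsadd)
        qed
        have "(\<Sum>i\<le>k. ?Tn i u * ?Tn (k - i) v) - (\<Sum>i\<le>k. ?Tn i (ract u (?Tn (k - i) v) + lact (?Tn (k - i) u) v))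
           = (T u * S v - T (ract u (S v)) - S (ract u (T v) + lact (T u) v) + S u * T v - T (lact (S u) v))
             + (midL - midR)"
          unfolding hL hR by (simp add: Tadd algebra_simps)
        also have "\<dots> = 0" using key[of u v] hP by simp
        finally show ?thesis by simp
      qed
    qed
  qed
qed


end
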